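(* Let $D$ be a bipartite digraph on $n$ vertices and let $S_1,S_2$ be sidigraphs with underlying digraph $D$ such that $S_1\in\Delta^1_n$ and $S_2\in\Delta^2_n$. Then $\phi_{S_1}(\iota z)=\epsilon\,\phi_{S_2}(z)$ where $\epsilon=\iota$ if $n\equiv1\pmod 4$, $\epsilon=-\iota$ if $n\equiv 3\pmod 4$, $\epsilon=1$ if $n\equiv 0\pmod 4$, and $\epsilon=-1$ if $n\equiv 2\pmod 4$. Consequently $\mathrm{spec}(S_1)=\iota\,\mathrm{spec}(S_2)$, and if $z_{i1},\dots,z_{in}$ are the eigenvalues of $S_i$ ($i=1,2$), then $E(S_1)=\sum_{j=1}^n|\Im z_{2j}|$ and $E(S_2)=\sum_{j=1}^n|\Im z_{1j}|$.
   Context: A sidigraph is a digraph (no loops, at most one arc from $u$ to $v$) with a sign $\sigma(a)\in\{-1,1\}$ on each arc; its adjacency matrix $A(S)$ has entry $\sigma(v_i,v_j)$ if there is an arc from $v_i$ to $v_j$ and $0$ otherwise, $\phi_S(z)=\det(zI-A(S))$, and $\mathrm{spec}(S)$ is the multiset of its eigenvalues. The energy is $E(S)=\sum_j|\Re z_j|$ over the eigenvalues $z_j$; $\Im$ denotes imaginary part and $\iota=\sqrt{-1}$. The sign of a directed cycle is the product of its arc signs. $\Delta^1_n$: sidigraphs on $n$ vertices with bipartite underlying digraph in which every directed cycle of length $\equiv0\pmod4$ is negative and every directed cycle of length $\equiv2\pmod 4$ is positive. $\Delta^2_n$: sidigraphs on $n$ vertices with bipartite underlying digraph in which every directed cycle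 is negative. *)

theory Defs
  imports "Jordan_Normal_Form.Char_Poly" "HOL-Library.Multiset"
begin

text \<open>Vertices are 0..n-1. A digraph is an arc set D (no loops, at most one arc
  u to v automatically since D is a set). A sidigraph with underlying digraph D
  is given by a sign function sigma with values in {-1,1} on the arcs of D.\<close>

definition digraph :: "nat \<Rightarrow> (nat \<times> nat) set \<Rightarrow> bool" where
  "digraph n D \<longleftrightarrow> D \<subseteq> {0..<n} \<times> {0..<n} \<and> (\<forall>v. (v, v) \<notin> D)"

definition bipartite_digraph :: "nat \<Rightarrow> (nat \<times> nat) set \<Rightarrow> bool" where
  "bipartite_digraph n D \<longleftrightarrow> digraph n D \<and>
     (\<exists>X. X \<subseteq> {0..<n} \<and> (\<forall>(u, v) \<in> D. u \<in> X \<longleftrightarrow> v \<notin> X))"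

definition signing :: "(nat \<times> nat) set \<Rightarrow> (nat \<times> nat \<Rightarrow> int) \<Rightarrow> bool" where
  "signing D \<sigma> \<longleftrightarrow> (\<forall>a \<in> D. \<sigma> a \<in> {-1, 1})"

definition dcycle :: "(nat \<times> nat) set \<Rightarrow> nat list \<Rightarrow> bool" where
  "dcycle D vs \<longleftrightarrow> vs \<noteq> [] \<and> distinct vs \<and>
     (\<forall>i < length vs. (vs ! i, vs ! ((i + 1) mod length vs)) \<in> D)"

definition cycle_sign :: "(nat \<times> nat \<Rightarrow> int) \<Rightarrow> nat list \<Rightarrow> int" where
  "cycle_sign \<sigma> vs = (\<Prod>i < length vs. \<sigma> (vs ! i, vs ! ((i + 1) mod length vs)))"

definition Delta1 :: "nat \<Rightarrow> (nat \<times> nat) set \<Rightarrow> (nat \<times> nat \<Rightarrow> int) \<Rightarrow> bool" where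
  "Delta1 n D \<sigma> \<longleftrightarrow> bipartite_digraph n D \<and> signing D \<sigma> \<and>
     (\<forall>vs. dcycle D vs \<longrightarrow>
        (length vs mod 4 = 0 \<longrightarrow> cycle_sign \<sigma> vs = -1) \<and>
        (length vs mod 4 = 2 \<longrightarrow> cycle_sign \<sigma> vs = 1))"

definition Delta2 :: "nat \<Rightarrow> (nat \<times> nat) set \<Rightarrow> (nat \<times> nat \<Rightarrow> int) \<Rightarrow> bool" where
  "Delta2 n D \<sigma> \<longleftrightarrow> bipartite_digraph n D \<and> signing D \<sigma> \<and>
     (\<forall>vs. dcycle D vs \<longrightarrow> cycle_sign \<sigma> vs = -1)"

definition adj :: "nat \<Rightarrow> (nat \<times> nat) set \<Rightarrow> (nat \<times> nat \<Rightarrow> int) \<Rightarrow> complex mat" where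
  "adj n D \<sigma> = mat n n (\<lambda>(i, j). if (i, j) \<in> D then of_int (\<sigma> (i, j)) else 0)"

definition phi :: "nat \<Rightarrow> (nat \<times> nat) set \<Rightarrow> (nat \<times> nat \<Rightarrow> int) \<Rightarrow> complex \<Rightarrow> complex" where
  "phi n D \<sigma> z = det (z \<cdot>\<^sub>m 1\<^sub>m n - adj n D \<sigma>)"

definition spec :: "nat \<Rightarrow> (nat \<times> nat) set \<Rightarrow> (nat \<times> nat \<Rightarrow> int) \<Rightarrow> complex multiset" where
  "spec n D \<sigma> = proots (char_poly (adj n D \<sigma>))"

definition energy :: "nat \<Rightarrow> (nat \<times> nat) set \<Rightarrow> (nat \<times> nat \<Rightarrow> int) \<Rightarrow> real" where
  "energy n D \<sigma> = sum_mset (image_mset (\<lambda>z. \<bar>Re z\<bar>) (spec n D \<sigma>))"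

end

theory Submission
  imports Defs "HOL-Combinatorics.Orbits"
begin

lemma funpow_perm_in:
  fixes p :: "nat \<Rightarrow> nat"
  assumes "p permutes {0..<n}" "x < n" shows "(p ^^ m) x < n"
proof (induction m)
  case (Suc m) then show ?case using permutes_in_image[OF assms(1), of "(p ^^ m) x"] by auto
qed (use assms in simp)

lemma orbit_eq_of_mem:
  assumes "permutation p" "z \<in> orbit p x" shows "orbit p z = orbit p x"
proof
  show "orbit p z \<subseteq> orbit p x" using assms(2) orbit_trans by fast
  have "x \<in> orbit p z" using orbit_swap[OF permutation_self_in_orbit[OF assms(1)] assms(2)] .
  then show "orbit p x \<subseteq> orbit p z" using orbit_trans by fast
qed

lemma i_pow_mod4: "(\<i>::complex) ^ k = \<i> ^ (k mod 4)"
proof -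
  have "(\<i>::complex) ^ k = \<i> ^ (4 * (k div 4) + k mod 4)" by simp
  also have "\<dots> = (\<i> ^ 4) ^ (k div 4) * \<i> ^ (k mod 4)" by (simp only: power_add power_mult)
  finally have "(\<i>::complex) ^ k = (\<i> ^ 4) ^ (k div 4) * \<i> ^ (k mod 4)" .
  then show ?thesis by simp
qed

lemma mi_pow_mod4: "(-\<i>::complex) ^ k = (-\<i>) ^ (k mod 4)"
proof -
  have "(-\<i>::complex) ^ k = (-\<i>) ^ (4 * (k div 4) + k mod 4)" by simp
  also have "\<dots> = ((-\<i>) ^ 4) ^ (k div 4) * (-\<i>) ^ (k mod 4)" by (simp only: power_add power_mult)
  finally have "(-\<i>::complex) ^ k = ((-\<i>) ^ 4) ^ (k div 4) * (-\<i>) ^ (k mod 4)" .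
  then show ?thesis by simp
qed

lemma orbit_prod:
  fixes p :: "nat \<Rightarrow> nat"
  assumes perm: "p permutes {0..<n}" and x: "x < n" and nf: "p x \<noteq> x"
    and arcs: "\<forall>i<n. p i \<noteq> i \<longrightarrow> (i, p i) \<in> D"
    and d1: "Delta1 n D \<sigma>1" and d2: "Delta2 n D \<sigma>2"
  shows "(\<Prod>y\<in>orbit p x. - \<i> * of_int (\<sigma>1 (y, p y)) * of_int (\<sigma>2 (y, p y))) = (1::complex)"
proof -
  have pp: "permutation p" using perm permutation_permutes by blast
  have xo: "x \<in> orbit p x" using permutation_self_in_orbit[OF pp] .
  define k where "k = funpow_dist1 p x x"
  have pk: "(p ^^ k) x = x" unfolding k_def using funpow_dist1_prop[OF xo] .
  have k0: "k > 0" unfolding k_def by simp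
  have O: "orbit p x = (\<lambda>m. (p ^^ m) x) ` {0..<k}" unfolding k_def using orbit_conv_funpow_dist1[OF xo] .
  have inj: "inj_on (\<lambda>m. (p ^^ m) x) {0..<k}" unfolding k_def using inj_on_funpow_dist1[OF xo] .
  have injp: "inj p" using perm permutes_inj by blast
  have nfm: "p ((p ^^ m) x) \<noteq> (p ^^ m) x" for m
  proof
    assume "p ((p ^^ m) x) = (p ^^ m) x"
    then have "(p ^^ m) (p x) = (p ^^ m) x" by (simp add: funpow_swap1)
    then have "p x = x" using inj_fn[OF injp, of m] by (meson injD)
    with nf show False by simp
  qed
  have arcm: "((p ^^ m) x, p ((p ^^ m) x)) \<in> D" for m
    using arcs funpow_perm_in[OF perm x] nfm by blast
  define vs where "vs = map (\<lambda>m. (p ^^ m) x) [0..<k]"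
  have lv: "length vs = k" unfolding vs_def by simp
  have vsi: "i < k \<Longrightarrow> vs ! i = (p ^^ i) x" for i unfolding vs_def by simp
  have vsn: "i < k \<Longrightarrow> vs ! ((i + 1) mod k) = p ((p ^^ i) x)" for i
  proof -
    assume i: "i < k"
    have "vs ! ((i + 1) mod k) = (p ^^ ((i + 1) mod k)) x" using vsi k0 by simp
    also have "\<dots> = (p ^^ (i + 1)) x" using funpow_mod_eq[OF pk] by simp
    finally show ?thesis by simp
  qed
  have vsn2: "(p ^^ (Suc i mod k)) x = p ((p ^^ i) x)" for i
    using funpow_mod_eq[OF pk, of "Suc i"] by simp
  have dc: "dcycle D vs" unfolding dcycle_def
  proof (intro conjI allI impI)
    show "vs \<noteq> []" using lv k0 by auto
    show "distinct vs" unfolding vs_def using inj by (simp add: distinct_map)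
    fix i assume "i < length vs"
    then show "(vs ! i, vs ! ((i + 1) mod length vs)) \<in> D" using lv vsi vsn arcm by simp
  qed
  have cs: "cycle_sign \<sigma> vs = (\<Prod>y\<in>orbit p x. \<sigma> (y, p y))" for \<sigma>
  proof -
    have "cycle_sign \<sigma> vs = (\<Prod>i<k. \<sigma> ((p ^^ i) x, p ((p ^^ i) x)))"
      unfolding cycle_sign_def lv by (rule prod.cong) (auto simp: vsi vsn2)
    also have "\<dots> = (\<Prod>i\<in>{0..<k}. \<sigma> ((p ^^ i) x, p ((p ^^ i) x)))"
      by (simp add: atLeast0LessThan)
    also have "\<dots> = (\<Prod>y\<in>orbit p x. \<sigma> (y, p y))"
      unfolding O by (rule prod.reindex[OF inj, symmetric, unfolded comp_def])
    finally show ?thesis .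
  qed
  obtain X where X: "\<forall>(u, v) \<in> D. u \<in> X \<longleftrightarrow> v \<notin> X"
    using d1 unfolding Delta1_def bipartite_digraph_def by blast
  have alt: "((p ^^ m) x \<in> X) = (even m = (x \<in> X))" for m
  proof (induction m)
    case (Suc m)
    have "((p ^^ m) x \<in> X) = (p ((p ^^ m) x) \<notin> X)" using X arcm[of m] by blast
    then show ?case using Suc by auto
  qed simp
  have ek: "even k" using alt[of k] pk by (cases "x \<in> X") auto
  have s2: "cycle_sign \<sigma>2 vs = -1" using d2 dc unfolding Delta2_def by blast
  have c1: "k mod 4 = 0 \<Longrightarrow> cycle_sign \<sigma>1 vs = -1" "k mod 4 = 2 \<Longrightarrow> cycle_sign \<sigma>1 vs = 1"
    using d1 dc lv unfolding Delta1_def by auto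
  have fin: "finite (orbit p x)" using finite_orbit[OF xo] .
  have "(\<Prod>y\<in>orbit p x. - \<i> * of_int (\<sigma>1 (y, p y)) * of_int (\<sigma>2 (y, p y)))
      = (- \<i>) ^ card (orbit p x) * of_int (\<Prod>y\<in>orbit p x. \<sigma>1 (y, p y)) * of_int (\<Prod>y\<in>orbit p x. \<sigma>2 (y, p y))"
    by (simp only: prod.distrib prod_constant of_int_prod)
  also have "card (orbit p x) = k" unfolding O using card_image[OF inj] by simp
  finally have eq: "(\<Prod>y\<in>orbit p x. - \<i> * of_int (\<sigma>1 (y, p y)) * of_int (\<sigma>2 (y, p y)))
      = (- \<i>) ^ (k mod 4) * of_int (cycle_sign \<sigma>1 vs) * of_int (cycle_sign \<sigma>2 vs)"
    unfolding cs mi_pow_mod4[of k] .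
  have "k mod 4 = 0 \<or> k mod 4 = 2" using ek by presburger
  then show ?thesis
  proof
    assume h: "k mod 4 = 0" show ?thesis unfolding eq using h c1 s2 by simp
  next
    assume h: "k mod 4 = 2" show ?thesis unfolding eq using h c1 s2 by (simp add: power2_eq_square)
  qed
qed

lemma all_prod:
  fixes p :: "nat \<Rightarrow> nat"
  assumes perm: "p permutes {0..<n}"
    and arcs: "\<forall>i<n. p i \<noteq> i \<longrightarrow> (i, p i) \<in> D"
    and d1: "Delta1 n D \<sigma>1" and d2: "Delta2 n D \<sigma>2"
  shows "(\<Prod>y\<in>{0..<n}. if p y = y then 1 else - \<i> * of_int (\<sigma>1 (y, p y)) * of_int (\<sigma>2 (y, p y))) = (1::complex)"
proof -
  define c where "c y = (if p y = y then 1 else - \<i> * of_int (\<sigma>1 (y, p y)) * of_int (\<sigma>2 (y, p y)) :: complex)" for y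
  have pp: "permutation p" using perm permutation_permutes by blast
  have sub: "orbit p x \<subseteq> {0..<n}" if "x < n" for x
    using funpow_perm_in[OF perm that] by (auto simp: orbit_altdef_permutation[OF pp])
  have U: "{0..<n} = \<Union> (orbit p ` {0..<n})"
  proof
    show "{0..<n} \<subseteq> \<Union> (orbit p ` {0..<n})"
    proof
      fix x assume "x \<in> {0..<n}"
      then show "x \<in> \<Union> (orbit p ` {0..<n})" by (rule UN_I) (rule permutation_self_in_orbit[OF pp])
    qed
    show "\<Union> (orbit p ` {0..<n}) \<subseteq> {0..<n}" by (rule UN_least) (use sub in auto)
  qed
  have "prod c {0..<n} = prod (prod c) (orbit p ` {0..<n})"
    apply (subst U)
    apply (rule prod.Union_disjoint[unfolded comp_def])
    using finite_orbit[OF permutation_self_in_orbit[OF pp]] apply auto[1]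
  proof (intro ballI impI)
    fix A B assume A: "A \<in> orbit p ` {0..<n}" and B: "B \<in> orbit p ` {0..<n}" and ne: "A \<noteq> B"
    then obtain a b where a: "A = orbit p a" and b: "B = orbit p b" by blast
    show "A \<inter> B = {}"
    proof (rule ccontr)
      assume "A \<inter> B \<noteq> {}"
      then obtain z where "z \<in> orbit p a" "z \<in> orbit p b" using a b by blast
      then have "orbit p a = orbit p b" using orbit_eq_of_mem[OF pp, of z a] orbit_eq_of_mem[OF pp, of z b] by simp
      then show False using ne a b by simp
    qed
  qed
  also have "\<dots> = 1"
  proof (rule prod.neutral, rule ballI)
    fix Ob assume "Ob \<in> orbit p ` {0..<n}"
    then obtain x where x: "x < n" and Ob: "Ob = orbit p x" by auto
    show "prod c Ob = 1"
    proof (cases "p x = x")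
      case True
      then have "Ob = {x}" using Ob orbit_eq_singleton_iff[of p x] by simp
      then show ?thesis using True by (simp add: c_def)
    next
      case False
      have nf: "p y \<noteq> y" if "y \<in> Ob" for y
      proof
        assume "p y = y"
        then have "orbit p y = {y}" using orbit_eq_singleton_iff[of p y] by simp
        moreover have "orbit p y = orbit p x" using orbit_eq_of_mem[OF pp, of y x] that Ob by simp
        ultimately have "orbit p x = {y}" by simp
        moreover have "x \<in> orbit p x" by (rule permutation_self_in_orbit[OF pp])
        ultimately have "x = y" by simp
        then show False using False \<open>p y = y\<close> by simp
      qed
      have "prod c Ob = (\<Prod>y\<in>orbit p x. - \<i> * of_int (\<sigma>1 (y, p y)) * of_int (\<sigma>2 (y, p y)))"
        using nf Ob by (intro prod.cong) (auto simp: c_def)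
      then show ?thesis using orbit_prod[OF perm x False arcs d1 d2] by simp
    qed
  qed
  finally show ?thesis unfolding c_def .
qed

lemma adj_carrier: "adj n D \<sigma> \<in> carrier_mat n n" unfolding adj_def by simp

lemma entry:
  assumes "i < n" "j < n"
  shows "(w \<cdot>\<^sub>m 1\<^sub>m n - adj n D \<sigma>) $$ (i, j) =
    (if i = j then w else 0) - (if (i, j) \<in> D then of_int (\<sigma> (i, j)) else 0)"
  using assms unfolding adj_def by simp

lemma phi_expand:
  "phi n D \<sigma> w = (\<Sum>p\<in>{p. p permutes {0..<n}}. signof p *
     (\<Prod>i=0..<n. (if i = p i then w else 0) - (if (i, p i) \<in> D then of_int (\<sigma> (i, p i)) else 0)))"
proof -
  have C: "w \<cdot>\<^sub>m 1\<^sub>m n - adj n D \<sigma> \<in> carrier_mat n n"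
    using adj_carrier[of n D \<sigma>] by (intro minus_carrier_mat) auto
  show ?thesis unfolding phi_def det_def'[OF C]
  proof (rule sum.cong[OF refl])
    fix p assume "p \<in> {p. p permutes {0..<n}}"
    then have p: "p permutes {0..<n}" by simp
    have "i < n \<Longrightarrow> p i < n" for i using permutes_in_image[OF p, of i] by simp
    then show "signof p * (\<Prod>i = 0..<n. (w \<cdot>\<^sub>m 1\<^sub>m n - adj n D \<sigma>) $$ (i, p i)) =
         signof p * (\<Prod>i = 0..<n. (if i = p i then w else 0) - (if (i, p i) \<in> D then of_int (\<sigma> (i, p i)) else 0))"
      by (intro arg_cong[where f="\<lambda>x. signof p * x"] prod.cong) (auto simp: entry)
  qed
qed

lemma term_eq:
  fixes p :: "nat \<Rightarrow> nat" and z :: complex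
  assumes perm: "p permutes {0..<n}"
    and d1: "Delta1 n D \<sigma>1" and d2: "Delta2 n D \<sigma>2"
  shows "(\<Prod>i=0..<n. (if i = p i then \<i> * z else 0) - (if (i, p i) \<in> D then of_int (\<sigma>1 (i, p i)) else 0))
    = \<i> ^ n * (\<Prod>i=0..<n. (if i = p i then z else 0) - (if (i, p i) \<in> D then of_int (\<sigma>2 (i, p i)) else 0))"
proof -
  define f1 where "f1 i = (if i = p i then \<i> * z else 0) - (if (i, p i) \<in> D then of_int (\<sigma>1 (i, p i)) else 0)" for i
  define f2 where "f2 i = (if i = p i then z else 0) - (if (i, p i) \<in> D then of_int (\<sigma>2 (i, p i)) else 0)" for i
  define c where "c y = (if p y = y then 1 else - \<i> * of_int (\<sigma>1 (y, p y)) * of_int (\<sigma>2 (y, p y)) :: complex)" for y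
  have noloop: "(i, i) \<notin> D" for i using d1 unfolding Delta1_def bipartite_digraph_def digraph_def by blast
  have sg: "\<sigma>2 a \<in> {-1, 1}" if "a \<in> D" for a using d2 that unfolding Delta2_def signing_def by blast
  have pt: "f1 i = \<i> * f2 i * c i" for i
  proof (cases "p i = i")
    case True then show ?thesis using noloop by (simp add: f1_def f2_def c_def)
  next
    case False
    show ?thesis
    proof (cases "(i, p i) \<in> D")
      case True
      have "of_int (\<sigma>2 (i, p i)) * of_int (\<sigma>2 (i, p i)) = (1::complex)"
        using sg[OF True] by auto
      then show ?thesis using False True
        by (simp add: f1_def f2_def c_def algebra_simps)
    next
      case False2: False
      then show ?thesis using False by (simp add: f1_def f2_def c_def)
    qed
  qed
  have "prod f1 {0..<n} = \<i> ^ n * prod f2 {0..<n} * prod c {0..<n}"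
    unfolding pt by (simp add: prod.distrib)
  also have "\<dots> = \<i> ^ n * prod f2 {0..<n}"
  proof (cases "\<forall>i<n. p i \<noteq> i \<longrightarrow> (i, p i) \<in> D")
    case True
    then show ?thesis using all_prod[OF perm True d1 d2] unfolding c_def by simp
  next
    case False
    then obtain i where "i < n" "p i \<noteq> i" "(i, p i) \<notin> D" by blast
    then have "f2 i = 0" by (auto simp: f2_def)
    then have "prod f2 {0..<n} = 0" using \<open>i < n\<close> by (intro prod_zero) auto
    then show ?thesis by simp
  qed
  finally show ?thesis unfolding f1_def f2_def .
qed

lemma phi_rel:
  assumes d1: "Delta1 n D \<sigma>1" and d2: "Delta2 n D \<sigma>2"
  shows "phi n D \<sigma>1 (\<i> * z) = \<i> ^ n * phi n D \<sigma>2 z"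
  unfolding phi_expand sum_distrib_left
  by (rule sum.cong[OF refl]) (simp add: term_eq[OF _ d1 d2])

lemma poly_char_phi: "poly (char_poly (adj n D \<sigma>)) w = phi n D \<sigma> w"
  unfolding char_poly_def phi_def
proof (rule poly_det_cong[of _ n])
  show "w \<cdot>\<^sub>m 1\<^sub>m n - adj n D \<sigma> \<in> carrier_mat n n"
    using adj_carrier[of n D \<sigma>] by (intro minus_carrier_mat) auto
  show "char_poly_matrix (adj n D \<sigma>) \<in> carrier_mat n n"
    using adj_carrier[of n D \<sigma>] by simp
  fix i j assume "i < n" "j < n"
  then show "poly (char_poly_matrix (adj n D \<sigma>) $$ (i, j)) w = (w \<cdot>\<^sub>m 1\<^sub>m n - adj n D \<sigma>) $$ (i, j)"
    unfolding char_poly_matrix_def by (simp add: adj_def)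
qed

lemma proots_lin: "proots (\<Prod>a\<leftarrow>as. [:- a, 1:]) = mset (as :: complex list)"
proof (induction as)
  case (Cons a as)
  have "0 \<notin> (\<lambda>a. [:- a, 1:]) ` set as"
  proof
    assume "0 \<in> (\<lambda>a. [:- a, 1:]) ` set as"
    then obtain b where "0 = [:- b, 1 :: complex:]" by blast
    then show False by (metis one_neq_zero pCons_eq_0_iff)
  qed
  then have "(\<Prod>a\<leftarrow>as. [:- a, 1:]) \<noteq> 0" by (simp add: prod_list_zero_iff)
  moreover have "[:- a, 1:] \<noteq> 0" by simp
  ultimately have "proots ([:- a, 1:] * (\<Prod>a\<leftarrow>as. [:- a, 1:])) = proots [:- a, 1:] + proots (\<Prod>a\<leftarrow>as. [:- a, 1:])"
    by (rule proots_mult[rotated -1, OF _ _]) 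
  then show ?case using Cons.IH by simp
qed simp

lemma poly_lin: "poly (\<Prod>a\<leftarrow>as. [:- a, 1:]) x = (\<Prod>a\<leftarrow>as. x - (a::complex))"
  by (induction as) (simp_all add: left_diff_distrib)

lemma lin_rot: "\<i> ^ length as * (\<Prod>a\<leftarrow>as. (- \<i> * w) - a) = (\<Prod>a\<leftarrow>as. w - \<i> * a)"
proof (induction as)
  case (Cons a as)
  have e: "\<i> * ((- \<i> * w) - a) = w - \<i> * a" by (simp add: algebra_simps)
  have "\<i> ^ length (a # as) * (\<Prod>a\<leftarrow>a # as. (- \<i> * w) - a)
     = (\<i> * ((- \<i> * w) - a)) * (\<i> ^ length as * (\<Prod>a\<leftarrow>as. (- \<i> * w) - a))"
    by (simp add: mult_ac)
  also have "\<dots> = (w - \<i> * a) * (\<Prod>a\<leftarrow>as. w - \<i> * a)" by (simp only: e Cons.IH)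
  finally show ?case by simp
qed simp

theorem mainTheorem13:
  fixes n :: nat and D :: "(nat \<times> nat) set" and \<sigma>1 \<sigma>2 :: "nat \<times> nat \<Rightarrow> int"
  assumes "bipartite_digraph n D"
    and "Delta1 n D \<sigma>1" and "Delta2 n D \<sigma>2"
  defines "\<epsilon> \<equiv> (if n mod 4 = 1 then \<i> else if n mod 4 = 3 then - \<i>
                  else if n mod 4 = 0 then 1 else -1)"
  shows "(\<forall>z. phi n D \<sigma>1 (\<i> * z) = \<epsilon> * phi n D \<sigma>2 z)
    \<and> spec n D \<sigma>1 = image_mset (\<lambda>z. \<i> * z) (spec n D \<sigma>2)
    \<and> energy n D \<sigma>1 = sum_mset (image_mset (\<lambda>z. \<bar>Im z\<bar>) (spec n D \<sigma>2))
    \<and> energy n D \<sigma>2 = sum_mset (image_mset (\<lambda>z. \<bar>Im z\<bar>) (spec n D \<sigma>1))"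
proof -
  have eps: "\<epsilon> = \<i> ^ n"
  proof -
    have "n mod 4 = 0 \<or> n mod 4 = 1 \<or> n mod 4 = 2 \<or> n mod 4 = 3" by arith
    then show ?thesis unfolding \<epsilon>_def i_pow_mod4[of n]
      by (auto simp: power2_eq_square power3_eq_cube)
  qed
  have P1: "\<forall>z. phi n D \<sigma>1 (\<i> * z) = \<epsilon> * phi n D \<sigma>2 z"
    using phi_rel[OF assms(2,3)] eps by simp
  obtain as where as: "char_poly (adj n D \<sigma>2) = (\<Prod>a\<leftarrow>as. [:- a, 1:])" "length as = n"
    using char_poly_factorized[OF adj_carrier[of n D \<sigma>2]] by blast
  have cp1: "char_poly (adj n D \<sigma>1) = (\<Prod>a\<leftarrow>map (\<lambda>a. \<i> * a) as. [:- a, 1:])"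
  proof -
    have "poly (char_poly (adj n D \<sigma>1)) w = poly (\<Prod>a\<leftarrow>map (\<lambda>a. \<i> * a) as. [:- a, 1:]) w" for w
    proof -
      have "poly (char_poly (adj n D \<sigma>1)) w = phi n D \<sigma>1 (\<i> * (- \<i> * w))"
        by (simp add: poly_char_phi)
      also have "\<dots> = \<i> ^ n * phi n D \<sigma>2 (- \<i> * w)" by (rule phi_rel[OF assms(2,3)])
      also have "\<dots> = \<i> ^ length as * (\<Prod>a\<leftarrow>as. (- \<i> * w) - a)"
        using as by (simp add: poly_char_phi[symmetric] poly_lin)
      also have "\<dots> = (\<Prod>a\<leftarrow>as. w - \<i> * a)" by (rule lin_rot)
      also have "\<dots> = poly (\<Prod>a\<leftarrow>map (\<lambda>a. \<i> * a) as. [:- a, 1:]) w"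
        using poly_lin[of "map (\<lambda>a. \<i> * a) as" w] by (simp add: comp_def)
      finally show ?thesis .
    qed
    then show ?thesis using poly_eq_poly_eq_iff by blast
  qed
  have S: "spec n D \<sigma>1 = image_mset (\<lambda>z. \<i> * z) (spec n D \<sigma>2)"
    unfolding spec_def cp1 as proots_lin by simp
  have E1: "energy n D \<sigma>1 = sum_mset (image_mset (\<lambda>z. \<bar>Im z\<bar>) (spec n D \<sigma>2))"
    unfolding energy_def S image_mset.compositionality by (simp add: comp_def)
  have E2: "energy n D \<sigma>2 = sum_mset (image_mset (\<lambda>z. \<bar>Im z\<bar>) (spec n D \<sigma>1))"
    unfolding energy_def S image_mset.compositionality by (simp add: comp_def)
  show ?thesis using P1 S E1 E2 by blast
qed

end
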